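(* Let $q$ be a prime power, let $\varepsilon = \frac{1}{9q}$, and let $G \in \mathbb{F}_q^{N\times n}$ be such that every nonzero vector of the form $Gx$, $x\in\mathbb{F}_q^n\setminus\{0\}$, has Hamming weight in $[d,(1+\varepsilon)d]$ for some integer $d\ge 1$. Let $Q_1,\dots,Q_m\in\mathbb{F}_q^{n\times n}$ and define $$V := \{GXG^T : X \in \mathbb{F}_q^{n\times n},\ X^T = X,\ Q_1(X) = 0,\dots,Q_m(X)=0\}\subseteq \mathbb{F}_q^{N\times N}.$$ Then: (i) if there is a nonzero $x \in \{0,1\}^n$ with $Q_\ell(xx^T)=0$ for all $\ell$, then $V$ contains a nonzero matrix $Y$ with $\|Y\|_0 \le (1+\frac{1}{3q})d^2$; (ii) if there is no nonzero $x \in \mathbb{F}_q^n$ with $Q_\ell(xx^T)=0$ for all $\ell$, then every nonzero $Y \in V$ satisfies $\|Y\|_0 \ge (1+\frac1q)d^2$.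
   Context: For $Q, X \in \mathbb{F}_q^{n\times n}$, $Q(X):=\sum_{i,j}Q[i,j]X[i,j]$. $\|Y\|_0$ is the number of nonzero entries of $Y$. *)

theory Defs
  imports "HOL-Analysis.Analysis"
begin

definition qeval :: "'a::semiring_1^'n::finite^'n \<Rightarrow> 'a^'n^'n \<Rightarrow> 'a" where
  "qeval Q X = (\<Sum>i\<in>UNIV. \<Sum>j\<in>UNIV. Q $ i $ j * X $ i $ j)"

definition hweight :: "'a::zero^'N::finite \<Rightarrow> nat" where
  "hweight v = card {i. v $ i \<noteq> 0}"

definition l0norm :: "'a::zero^'c::finite^'r::finite \<Rightarrow> nat" where
  "l0norm Y = card {(i, j). Y $ i $ j \<noteq> 0}"

definition outer :: "'a::times^'n \<Rightarrow> 'a^'n^'n" where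
  "outer x = (\<chi> i j. x $ i * x $ j)"

definition Vset :: "'a::comm_ring_1^'n::finite^'N::finite \<Rightarrow> (nat \<Rightarrow> 'a^'n^'n) \<Rightarrow> nat \<Rightarrow> ('a^'N^'N) set" where
  "Vset G Q m = {G ** X ** transpose G | X. transpose X = X \<and> (\<forall>l<m. qeval (Q l) X = 0)}"

end

theory Submission
  imports Defs
begin

lemma Y_entry:
  fixes G :: "'a::comm_ring_1^'n::finite^'N::finite" and X :: "'a^'n^'n"
  shows "(G ** X ** transpose G) $ i $ p = (G *v (X *v (G $ p))) $ i"
proof -
  have "(G ** X ** transpose G) $ i $ p = (\<Sum>k\<in>UNIV. (\<Sum>j\<in>UNIV. G$i$j * X$j$k) * G$p$k)"
    by (simp add: matrix_matrix_mult_def transpose_def)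
  also have "\<dots> = (\<Sum>j\<in>UNIV. G$i$j * (\<Sum>k\<in>UNIV. X$j$k * G$p$k))"
    unfolding sum_distrib_right sum_distrib_left mult.assoc by (rule sum.swap)
  also have "\<dots> = (G *v (X *v (G $ p))) $ i"
    by (simp add: matrix_vector_mult_def)
  finally show ?thesis .
qed

lemma l0norm_cols:
  fixes Y :: "'a::zero^'c::finite^'r::finite"
  shows "l0norm Y = (\<Sum>p\<in>UNIV. card {i. Y $ i $ p \<noteq> 0})"
proof -
  have "{(i, j). Y $ i $ j \<noteq> 0} = (\<lambda>(j,i). (i,j)) ` (SIGMA j:UNIV. {i. Y $ i $ j \<noteq> 0})"
    by auto
  moreover have "inj_on (\<lambda>(j,i). (i,j)) (SIGMA j:(UNIV::'c set). {i. Y $ i $ j \<noteq> 0})"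
    by (auto simp: inj_on_def)
  ultimately show ?thesis unfolding l0norm_def
    by (simp add: card_image card_SigmaI)
qed



lemma card_sum_ind:
  "card {x::'b::finite. P x} = (\<Sum>x\<in>UNIV. if P x then 1 else 0)"
  by (simp add: sum.If_cases)

lemma zero_count:
  fixes \<alpha> \<beta> :: "'a::{field,finite}"
  assumes "\<alpha> \<noteq> 0 \<or> \<beta> \<noteq> 0"
  shows "card {z::'a\<times>'a. fst z * \<alpha> + snd z * \<beta> = 0} = CARD('a)"
proof (cases "\<alpha> = 0")
  case True
  then have b: "\<beta> \<noteq> 0" using assms by auto
  have "{z::'a\<times>'a. fst z * \<alpha> + snd z * \<beta> = 0} = (\<lambda>s. (s,0)) ` UNIV"
    using True b by auto
  moreover have "inj (\<lambda>s::'a. (s,0::'a))" by (auto simp: inj_def)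
  ultimately show ?thesis by (simp add: card_image)
next
  case False
  have "{z::'a\<times>'a. fst z * \<alpha> + snd z * \<beta> = 0} = (\<lambda>t. (- t * \<beta> / \<alpha>, t)) ` UNIV"
  proof (rule set_eqI, rule iffI)
    fix z :: "'a\<times>'a" assume "z \<in> {z. fst z * \<alpha> + snd z * \<beta> = 0}"
    then have "fst z = - snd z * \<beta> / \<alpha>" using False
      by (simp add: field_simps eq_neg_iff_add_eq_0)
    then show "z \<in> (\<lambda>t. (- t * \<beta> / \<alpha>, t)) ` UNIV"
      by (metis (no_types, lifting) prod.collapse rangeI)
  next
    fix z :: "'a\<times>'a" assume "z \<in> (\<lambda>t. (- t * \<beta> / \<alpha>, t)) ` UNIV"
    then show "z \<in> {z. fst z * \<alpha> + snd z * \<beta> = 0}" using False by auto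
  qed
  moreover have "inj (\<lambda>t::'a. (- t * \<beta> / \<alpha>, t))" by (auto simp: inj_def)
  ultimately show ?thesis by (simp add: card_image)
qed


lemma card_sq: "card (UNIV::('a::finite\<times>'a) set) = CARD('a) * CARD('a)"
  by (metis UNIV_Times_UNIV card_cartesian_product)

lemma nonzero_count:
  fixes \<alpha> \<beta> :: "'a::{field,finite}"
  assumes "\<alpha> \<noteq> 0 \<or> \<beta> \<noteq> 0"
  shows "card {z::'a\<times>'a. fst z * \<alpha> + snd z * \<beta> \<noteq> 0} = CARD('a) * CARD('a) - CARD('a)"
proof -
  have "{z::'a\<times>'a. fst z * \<alpha> + snd z * \<beta> \<noteq> 0} = UNIV - {z::'a\<times>'a. fst z * \<alpha> + snd z * \<beta> = 0}"
    by auto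
  then show ?thesis using zero_count[OF assms]
    by (simp add: card_Diff_subset card_sq del: UNIV_Times_UNIV)
qed

lemma support_two:
  fixes u v :: "'a::{field,finite}^'N::finite"
  assumes hw: "\<And>s t. (s,t) \<noteq> (0,0) \<Longrightarrow> d \<le> hweight (s *s u + t *s v)"
  shows "(CARD('a)+1) * d \<le> CARD('a) * card {p. u$p \<noteq> 0 \<or> v$p \<noteq> 0}"
proof -
  define q where "q = CARD('a)"
  define S where "S = {p. u$p \<noteq> 0 \<or> v$p \<noteq> 0}"
  have q2: "q \<ge> 2" unfolding q_def
  proof -
    have "card {0::'a, 1} \<le> card (UNIV::'a set)" by (rule card_mono) auto
    then show "2 \<le> card (UNIV::'a set)" by simp
  qed
  have A: "(\<Sum>z\<in>UNIV. hweight (fst z *s u + snd z *s v))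
      = (\<Sum>p\<in>UNIV. card {z::'a\<times>'a. fst z * u$p + snd z * v$p \<noteq> 0})"
    unfolding hweight_def card_sum_ind by (subst sum.swap) simp
  also have "\<dots> = (\<Sum>p\<in>UNIV. if p \<in> S then q*q - q else 0)"
    by (rule sum.cong) (auto simp: S_def q_def nonzero_count)
  also have "\<dots> = card S * (q*q - q)"
    by (simp add: sum.If_cases)
  finally have A': "(\<Sum>z\<in>UNIV. hweight (fst z *s u + snd z *s v)) = card S * (q*q - q)" .
  have "(\<Sum>z\<in>(UNIV::('a\<times>'a) set). (if z = (0,0) then 0 else d)) \<le> (\<Sum>z\<in>UNIV. hweight (fst z *s u + snd z *s v))"
  proof (rule sum_mono)
    fix z :: "'a\<times>'a"
    show "(if z = (0,0) then 0 else d) \<le> hweight (fst z *s u + snd z *s v)"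
      using hw[of "fst z" "snd z"] by (cases z) auto
  qed
  moreover have "(\<Sum>z\<in>(UNIV::('a\<times>'a) set). (if z = (0,0) then 0 else d)) = (q*q - 1) * d"
  proof -
    have "(\<Sum>z\<in>(UNIV::('a\<times>'a) set). (if z = (0,0) then 0 else d)) = (\<Sum>z\<in>UNIV - {(0::'a,0::'a)}. d)"
      by (simp add: sum.If_cases Compl_eq_Diff_UNIV)
    also have "\<dots> = (q*q - 1) * d"
      by (simp add: q_def card_sq card_Diff_subset del: UNIV_Times_UNIV)
    finally show ?thesis .
  qed
  ultimately have B: "(q*q - 1) * d \<le> card S * (q*q - q)" using A' by simp
  have e1: "q*q - 1 = (q-1)*(q+1)" and e2: "q*q - q = (q-1)*q"
    using q2 by (simp_all add: algebra_simps diff_mult_distrib)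
  have "(q-1) * ((q+1)*d) \<le> (q-1) * (q * card S)" using B unfolding e1 e2
    by (simp only: ac_simps)
  then have "(q+1)*d \<le> q * card S" using q2 by simp
  then show ?thesis by (simp add: q_def S_def)
qed

lemma outer_sym: "transpose (outer (x::'a::comm_ring_1^'n)) = outer x"
  by (simp add: vec_eq_iff outer_def transpose_def mult.commute)

lemma Y_outer:
  fixes G :: "'a::field^'n::finite^'N::finite"
  shows "(G ** outer x ** transpose G) $ i $ p = (G *v x) $ i * (G *v x) $ p"
proof -
  have "outer x *v (G $ p) = (G *v x) $ p *s x"
    by (simp add: vec_eq_iff outer_def matrix_vector_mult_def sum_distrib_left mult_ac)
  then show ?thesis unfolding Y_entry by (simp add: vector_scalar_commute mult.commute)
qed

lemma part_i:
  fixes G :: "'a::{field,finite}^'n::finite^'N::finite"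
    and Q :: "nat \<Rightarrow> 'a^'n^'n"
    and m :: nat and d :: nat
  assumes code: "\<And>x. x \<noteq> 0 \<Longrightarrow> G *v x \<noteq> 0 \<and> real d \<le> real (hweight (G *v x))
                 \<and> real (hweight (G *v x)) \<le> (1 + 1 / (9 * real CARD('a))) * real d"
    and x: "x \<noteq> 0" "\<forall>l<m. qeval (Q l) (outer x) = 0"
  shows "\<exists>Y\<in>Vset G Q m. Y \<noteq> 0 \<and>
                   real (l0norm Y) \<le> (1 + 1 / (3 * real CARD('a))) * (real d)\<^sup>2"
proof -
  define w where "w = G *v x"
  define Y where "Y = G ** outer x ** transpose G"
  have YV: "Y \<in> Vset G Q m" unfolding Y_def Vset_def using x(2) outer_sym by blast
  have wnz: "w \<noteq> 0" and wb: "real (hweight w) \<le> (1 + 1 / (9 * real CARD('a))) * real d"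
    using code[OF x(1)] by (auto simp: w_def)
  obtain i where wi: "w $ i \<noteq> 0" using wnz by (auto simp: vec_eq_iff)
  have Yent: "Y $ i $ p = w $ i * w $ p" for i p unfolding Y_def w_def by (rule Y_outer)
  have Ynz: "Y \<noteq> 0" using wi by (auto simp: vec_eq_iff Yent)
  have "{(i, j). Y $ i $ j \<noteq> 0} = {i. w $ i \<noteq> 0} \<times> {i. w $ i \<noteq> 0}"
    by (auto simp: Yent)
  then have "l0norm Y = hweight w * hweight w"
    by (simp add: l0norm_def hweight_def card_cartesian_product)
  then have L: "real (l0norm Y) = (real (hweight w))\<^sup>2" by (simp add: power2_eq_square)
  define e where "e = 1 / (9 * real CARD('a))"
  have e0: "0 \<le> e" and e1: "e \<le> 1" unfolding e_def
  proof -
    have c1: "real CARD('a) \<ge> 1" using finite_UNIV_card_ge_0[where 'a='a] by simp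
    show "0 \<le> 1 / (9 * real CARD('a))" by simp
    have c9: "1 \<le> 9 * real CARD('a)" using c1 by linarith
    show "1 / (9 * real CARD('a)) \<le> 1" using c9 by simp
  qed
  have "(real (hweight w))\<^sup>2 \<le> ((1 + e) * real d)\<^sup>2"
    using wb by (intro power_mono) (auto simp: e_def)
  also have "\<dots> = (1 + 2*e + e*e) * (real d)\<^sup>2" by (simp add: power2_eq_square algebra_simps)
  also have "\<dots> \<le> (1 + 3*e) * (real d)\<^sup>2"
    using e0 e1 by (intro mult_right_mono) (auto simp: mult_le_cancel_left1 mult_left_le)
  also have "1 + 3*e = 1 + 1 / (3 * real CARD('a))" by (simp add: e_def)
  finally show ?thesis using YV Ynz L by auto
qed

lemma part_ii:
  fixes G :: "'a::{field,finite}^'n::finite^'N::finite"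
    and Q :: "nat \<Rightarrow> 'a^'n^'n"
    and m :: nat and d :: nat
  assumes code: "\<And>x. x \<noteq> 0 \<Longrightarrow> G *v x \<noteq> 0 \<and> real d \<le> real (hweight (G *v x))
                 \<and> real (hweight (G *v x)) \<le> (1 + 1 / (9 * real CARD('a))) * real d"
    and nox: "\<not> (\<exists>x::'a^'n. x \<noteq> 0 \<and> (\<forall>l<m. qeval (Q l) (outer x) = 0))"
    and YV: "Y \<in> Vset G Q m" and Ynz: "Y \<noteq> 0"
  shows "real (l0norm Y) \<ge> (1 + 1 / real CARD('a)) * (real d)\<^sup>2"
proof -
  obtain X where YX: "Y = G ** X ** transpose G" and sym: "transpose X = X"
    and cons: "\<forall>l<m. qeval (Q l) X = 0"
    using YV unfolding Vset_def by blast
  have symm: "X $ i $ k = X $ k $ i" for i k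
    using sym by (metis transpose_def vec_lambda_beta)
  have Yent: "Y $ i $ p = (G *v (X *v (G $ p))) $ i" for i p unfolding YX by (rule Y_entry)
  have "X \<noteq> 0"
  proof
    assume "X = 0"
    then have "Y = 0" by (simp add: vec_eq_iff Yent matrix_vector_mult_def)
    with Ynz show False by simp
  qed
  then obtain j0 where a0: "X $ j0 \<noteq> 0" by (auto simp: vec_eq_iff)
  have "\<exists>k. \<not> (\<exists>c. X $ k = c *s X $ j0)"
  proof (rule ccontr)
    assume "\<not> (\<exists>k. \<not> (\<exists>c. X $ k = c *s X $ j0))"
    then have "\<forall>k. \<exists>c. X $ k = c *s X $ j0" by blast
    then obtain c where c: "\<And>k. X $ k = c k *s X $ j0" by metis
    define x where "x = X $ j0"
    have ent: "X $ i $ k = c i * x $ k" for i k using c[of i] by (simp add: x_def)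
    have xk: "x $ k = c k * x $ j0" for k
      using ent[of k j0] symm[of k j0] by (simp add: x_def)
    have xj0: "x $ j0 \<noteq> 0"
    proof
      assume "x $ j0 = 0"
      then have "x $ i = 0" for i using xk[of i] by simp
      then have "x = 0" by (simp add: vec_eq_iff)
      with a0 show False by (simp add: x_def)
    qed
    have Xo: "x $ i * x $ k = x $ j0 * X $ i $ k" for i k
      unfolding ent[of i k] xk[of i] by (simp only: mult_ac)
    have "\<forall>l<m. qeval (Q l) (outer x) = 0"
    proof (intro allI impI)
      fix l assume "l < m"
      have "qeval (Q l) (outer x) = (\<Sum>i\<in>UNIV. \<Sum>j\<in>UNIV. Q l $ i $ j * (x $ j0 * X $ i $ j))"
        unfolding qeval_def outer_def by (simp only: vec_lambda_beta Xo)
      also have "\<dots> = x $ j0 * qeval (Q l) X"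
        unfolding qeval_def by (simp add: sum_distrib_left mult_ac)
      finally have "qeval (Q l) (outer x) = x $ j0 * qeval (Q l) X" .
      then show "qeval (Q l) (outer x) = 0" using cons \<open>l < m\<close> by simp
    qed
    moreover have "x \<noteq> 0" using a0 x_def by simp
    ultimately show False using nox by blast
  qed
  then obtain k where bk: "\<not> (\<exists>c. X $ k = c *s X $ j0)" by blast
  define a where "a = X $ j0"
  define b where "b = X $ k"
  have indep: "s *s a + t *s b \<noteq> 0" if "(s,t) \<noteq> (0,0)" for s t
  proof
    assume eq: "s *s a + t *s b = 0"
    show False
    proof (cases "t = 0")
      case True
      then have "s \<noteq> 0" using that by auto
      with eq True a0 show False by (simp add: a_def)
    next
      case False
      have ci: "s * a$i + t * b$i = 0" for i
        using arg_cong[OF eq, of "\<lambda>w. w $ i"] by simp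
      have "b$i = (- s / t) * a$i" for i
      proof -
        have "t * b$i = - (s * a$i)" using ci[of i] by (simp add: eq_neg_iff_add_eq_0 add.commute)
        then show ?thesis using False by (simp add: field_simps)
      qed
      then have "b = (- s / t) *s a" by (simp add: vec_eq_iff)
      then show False using bk a_def b_def by metis
    qed
  qed
  define u where "u = G *v a"
  define v where "v = G *v b"
  have hw: "d \<le> hweight (s *s u + t *s v)" if "(s,t) \<noteq> (0,0)" for s t
  proof -
    have "s *s u + t *s v = G *v (s *s a + t *s b)"
      by (simp add: u_def v_def matrix_vector_right_distrib vector_scalar_commute)
    then show ?thesis using code[OF indep[OF that]] by simp
  qed
  define S where "S = {p. u$p \<noteq> 0 \<or> v$p \<noteq> 0}"
  have sup: "(CARD('a)+1) * d \<le> CARD('a) * card S"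
    unfolding S_def by (rule support_two) (rule hw)
  have comp: "(G *v (X $ j)) $ p = (X *v (G $ p)) $ j" for j p
    by (simp add: matrix_vector_mult_def mult.commute)
  have "l0norm Y = (\<Sum>p\<in>UNIV. hweight (G *v (X *v (G $ p))))"
    unfolding l0norm_cols hweight_def Yent ..
  also have "\<dots> \<ge> (\<Sum>p\<in>UNIV. if p \<in> S then d else 0)"
  proof (rule sum_mono)
    fix p
    show "(if p \<in> S then d else 0) \<le> hweight (G *v (X *v (G $ p)))"
    proof (cases "p \<in> S")
      case True
      have "X *v (G $ p) \<noteq> 0"
      proof
        assume z: "X *v (G $ p) = 0"
        have "u $ p = 0" unfolding u_def a_def comp z by simp
        moreover have "v $ p = 0" unfolding v_def b_def comp z by simp
        ultimately show False using True unfolding S_def by blast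
      qed
      then have "real d \<le> real (hweight (G *v (X *v (G $ p))))" using code by blast
      then show ?thesis using True by simp
    qed simp
  qed
  finally have L: "d * card S \<le> l0norm Y" by (simp add: sum.If_cases mult.commute)
  define q where "q = real CARD('a)"
  have q0: "q > 0" unfolding q_def by simp
  have sup': "(q+1) * real d \<le> q * real (card S)"
  proof -
    have "real ((CARD('a)+1) * d) \<le> real (CARD('a) * card S)" using sup by (simp only: of_nat_le_iff)
    then show ?thesis unfolding q_def by (simp add: algebra_simps)
  qed
  have "(1 + 1 / q) * (real d)\<^sup>2 = real d * ((q+1) * real d / q)"
    using q0 by (simp add: field_simps power2_eq_square)
  also have "\<dots> \<le> real d * real (card S)"
  proof -
    have "(q+1) * real d / q \<le> real (card S)" using sup' q0 by (simp add: divide_le_eq mult.commute)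
    then show ?thesis by (rule mult_left_mono) simp
  qed
  also have "\<dots> \<le> real (l0norm Y)" 
  proof -
    have "real (d * card S) \<le> real (l0norm Y)" using L by (simp only: of_nat_le_iff)
    then show ?thesis by simp
  qed
  finally show ?thesis by (simp add: q_def)
qed

theorem mainTheorem8:
  fixes G :: "'a::{field,finite}^'n::finite^'N::finite"
    and Q :: "nat \<Rightarrow> 'a^'n^'n"
    and m :: nat and d :: nat
  assumes d_pos: "d \<ge> 1"
    and code: "\<And>x. x \<noteq> 0 \<Longrightarrow> G *v x \<noteq> 0 \<and> real d \<le> real (hweight (G *v x))
                 \<and> real (hweight (G *v x)) \<le> (1 + 1 / (9 * real CARD('a))) * real d"
  shows "((\<exists>x::'a^'n. x \<noteq> 0 \<and> (\<forall>i. x $ i \<in> {0, 1}) \<and> (\<forall>l<m. qeval (Q l) (outer x) = 0))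
            \<longrightarrow> (\<exists>Y\<in>Vset G Q m. Y \<noteq> 0 \<and>
                   real (l0norm Y) \<le> (1 + 1 / (3 * real CARD('a))) * (real d)\<^sup>2))
       \<and> ((\<not> (\<exists>x::'a^'n. x \<noteq> 0 \<and> (\<forall>l<m. qeval (Q l) (outer x) = 0)))
            \<longrightarrow> (\<forall>Y\<in>Vset G Q m. Y \<noteq> 0 \<longrightarrow>
                   real (l0norm Y) \<ge> (1 + 1 / real CARD('a)) * (real d)\<^sup>2))"
proof (intro conjI impI)
  assume "\<exists>x::'a^'n. x \<noteq> 0 \<and> (\<forall>i. x $ i \<in> {0, 1}) \<and> (\<forall>l<m. qeval (Q l) (outer x) = 0)"
  then obtain x :: "'a^'n" where x1: "x \<noteq> 0" and x2: "\<forall>l<m. qeval (Q l) (outer x) = 0" by blast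
  show "\<exists>Y\<in>Vset G Q m. Y \<noteq> 0 \<and>
                   real (l0norm Y) \<le> (1 + 1 / (3 * real CARD('a))) * (real d)\<^sup>2"
    using part_i[OF code x1 x2] .
next
  assume nox: "\<not> (\<exists>x::'a^'n. x \<noteq> 0 \<and> (\<forall>l<m. qeval (Q l) (outer x) = 0))"
  show "\<forall>Y\<in>Vset G Q m. Y \<noteq> 0 \<longrightarrow>
                   real (l0norm Y) \<ge> (1 + 1 / real CARD('a)) * (real d)\<^sup>2"
  proof (intro ballI impI)
    fix Y assume y1: "Y \<in> Vset G Q m" and y2: "Y \<noteq> 0"
    show "real (l0norm Y) \<ge> (1 + 1 / real CARD('a)) * (real d)\<^sup>2"
      using part_ii[OF code nox y1 y2] .
  qed
qed

end
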